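(* Let $X$ be a finite simplicial complex. Then $\partial_J\circ\partial_J=0$ on $\widehat{C}(X)$; hence $(\widehat{C}(X),\partial_J)$ is a chain complex, with $\partial_J$ of bidegree $(-1,0)$.
   Context: Let $X$ be a finite simplicial complex. Its face poset $\mathcal{F}(X)$ is the directed graph whose vertices are the nonempty simplices of $X$, with a directed edge $\sigma\to\tau$ iff $\tau$ is a codimension-one face of $\sigma$. A matching on $\mathcal{F}(X)$ is a set $m$ of edges of $\mathcal{F}(X)$, no two sharing an endpoint. Given a matching $m$, let $\mathcal{F}_m(X)$ be the directed graph obtained from $\mathcal{F}(X)$ by reversing every edge in $m$; a directed cycle of $\mathcal{F}_m(X)$ (closed directed path without repeated vertices) is supported by $m$, and $J(m)$ is the number of directed cycles supported by $m$. The matching complex $\mathrm{M}(X)$ has vertex set the edges of $\mathcal{F}(X)$ and simplices the nonempty matchings; $m_\sigma$ denotes the matching of a simplex $\sigma$. Let $\widehat{C}_i^j(X)$ be the $\mathbb{F}_2$-vector space with basis the $i$-dimensional simplices $\sigma$ of $\mathrm{M}(X)$ (matchings with $i+1$ edges) with $J(m_\sigma)=j$, and $\widehat{C}(X)=\bigoplus_{i,j\ge0}\widehat{C}_i^j(X)$. The simplicial boundary $\partial$ sends $\sigma$ to the mod-2 sum of its codimension-one faces (and sends $0$-simplices to $0$). Define $\partial_J(\sigma)$ as the sum of those codimension-one faces $\tau$ of $\sigma$ with $J(m_\tau)=J(m_\sigma)$, and $\partial_d=\partial-\partial_J$ (the sum of faces $\tau$ with $J(m_\tau)<J(m_\sigma)$).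 *)

theory Defs
  imports Main
begin

definition simplicial_complex :: "'v set set \<Rightarrow> bool" where
  "simplicial_complex K \<longleftrightarrow> finite K \<and> (\<forall>\<sigma>\<in>K. \<sigma> \<noteq> {} \<and> finite \<sigma>) \<and>
     (\<forall>\<sigma>\<in>K. \<forall>\<tau>. \<tau> \<subseteq> \<sigma> \<and> \<tau> \<noteq> {} \<longrightarrow> \<tau> \<in> K)"

definition face_edges :: "'v set set \<Rightarrow> ('v set \<times> 'v set) set" where
  "face_edges K = {(\<sigma>, \<tau>). \<sigma> \<in> K \<and> \<tau> \<in> K \<and> \<tau> \<subseteq> \<sigma> \<and> card \<sigma> = card \<tau> + 1}"

definition is_matching :: "'v set set \<Rightarrow> ('v set \<times> 'v set) set \<Rightarrow> bool" where
  "is_matching K m \<longleftrightarrow> m \<subseteq> face_edges K \<and>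
     (\<forall>e\<in>m. \<forall>e'\<in>m. e \<noteq> e' \<longrightarrow> {fst e, snd e} \<inter> {fst e', snd e'} = {})"

definition reversed_arcs :: "'v set set \<Rightarrow> ('v set \<times> 'v set) set \<Rightarrow> ('v set \<times> 'v set) set" where
  "reversed_arcs K m = (face_edges K - m) \<union> {(\<tau>, \<sigma>). (\<sigma>, \<tau>) \<in> m}"

definition cycle_arcs :: "'a list \<Rightarrow> ('a \<times> 'a) set" where
  "cycle_arcs vs = {(vs ! i, vs ! (Suc i mod length vs)) | i. i < length vs}"

text \<open>Directed cycles of a digraph with arc set G (closed directed paths without repeated
  vertices), each cycle identified with its set of arcs (so rotations are not distinguished).\<close>
definition directed_cycles :: "('a \<times> 'a) set \<Rightarrow> ('a \<times> 'a) set set" where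
  "directed_cycles G = {cycle_arcs vs | vs. vs \<noteq> [] \<and> distinct vs \<and> cycle_arcs vs \<subseteq> G}"

definition J :: "'v set set \<Rightarrow> ('v set \<times> 'v set) set \<Rightarrow> nat" where
  "J K m = card (directed_cycles (reversed_arcs K m))"

definition matching_simplices :: "'v set set \<Rightarrow> ('v set \<times> 'v set) set set" where
  "matching_simplices K = {m. is_matching K m \<and> m \<noteq> {}}"

text \<open>partial_J on a single simplex: codimension-one faces with the same J
  (0-simplices have boundary zero). Chains over F_2 are finite sets of simplices.\<close>
definition dJ_simplex :: "'v set set \<Rightarrow> ('v set \<times> 'v set) set \<Rightarrow> ('v set \<times> 'v set) set set" where
  "dJ_simplex K m = {m - {e} | e. e \<in> m \<and> card m \<ge> 2 \<and> J K (m - {e}) = J K m}"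

definition dJ :: "'v set set \<Rightarrow> ('v set \<times> 'v set) set set \<Rightarrow> ('v set \<times> 'v set) set set" where
  "dJ K c = {\<tau>. odd (card {m \<in> c. \<tau> \<in> dJ_simplex K m})}"

end

theory Submission
  imports Defs
begin

lemma face_edges_finite: "simplicial_complex K \<Longrightarrow> finite (face_edges K)"
  unfolding simplicial_complex_def face_edges_def
  by (rule finite_subset[of _ "K \<times> K"]) auto

lemma matching_sub: "is_matching K m \<Longrightarrow> m' \<subseteq> m \<Longrightarrow> is_matching K m'"
  unfolding is_matching_def by blast

lemma matching_clash:
  assumes "is_matching K m" "(x,y) \<in> m" "e \<in> m" "e \<noteq> (x,y)" "x = fst e \<or> x = snd e"
  shows False
  using assms unfolding is_matching_def by fastforce

lemma cycle_mono:
  assumes mK: "is_matching K m" and sub: "m' \<subseteq> m"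
    and ne: "vs \<noteq> []" and cyc: "cycle_arcs vs \<subseteq> reversed_arcs K m'"
  shows "cycle_arcs vs \<subseteq> reversed_arcs K m"
proof
  fix a assume aC: "a \<in> cycle_arcs vs"
  define n where "n = length vs"
  define nx where "nx i = Suc i mod n" for i
  have n0: "n > 0" using ne n_def by simp
  have arc: "(vs!i, vs!nx i) \<in> reversed_arcs K m'" if "i < n" for i
    using cyc that unfolding cycle_arcs_def n_def nx_def by blast
  have mfe: "m \<subseteq> face_edges K" using mK is_matching_def by blast
  define U where "U = {i. i < n \<and> (vs!nx i, vs!i) \<in> m'}"
  define D where "D = {i. i < n \<and> i \<notin> U}"
  have cU: "card (vs!nx i) = card (vs!i) + 1" if "i \<in> U" for i
    using that sub mfe unfolding U_def face_edges_def by auto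
  have cD: "card (vs!i) = card (vs!nx i) + 1" if "i \<in> D" for i
    using that arc[of i] unfolding D_def U_def reversed_arcs_def face_edges_def by auto
  have UD: "U \<union> D = {..<n}" "U \<inter> D = {}" unfolding U_def D_def by auto
  have finU: "finite U" "finite D" unfolding U_def D_def by auto
  have bij: "bij_betw nx {..<n} {..<n}"
  proof -
    have "inj_on nx {..<n}"
    proof (rule inj_onI)
      fix i j assume "i \<in> {..<n}" "j \<in> {..<n}" "nx i = nx j"
      then show "i = j" unfolding nx_def
        by (cases "Suc i = n"; cases "Suc j = n") (auto simp: Suc_lessI)
    qed
    moreover have "nx ` {..<n} \<subseteq> {..<n}" unfolding nx_def using n0 by auto
    ultimately show ?thesis
      by (simp add: bij_betw_def endo_inj_surj)
  qed
  have "(\<Sum>i<n. int (card (vs!nx i))) = (\<Sum>i<n. int (card (vs!i)))"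
    using sum.reindex_bij_betw[OF bij, of "\<lambda>i. int (card (vs!i))"] by simp
  hence "(\<Sum>i<n. int (card (vs!nx i)) - int (card (vs!i))) = 0"
    by (simp add: sum_subtractf)
  hence "(\<Sum>i\<in>U \<union> D. int (card (vs!nx i)) - int (card (vs!i))) = 0" using UD by simp
  hence "(\<Sum>i\<in>U. int (card (vs!nx i)) - int (card (vs!i))) +
         (\<Sum>i\<in>D. int (card (vs!nx i)) - int (card (vs!i))) = 0"
    using sum.union_disjoint[OF finU UD(2)] by metis
  moreover have "(\<Sum>i\<in>U. int (card (vs!nx i)) - int (card (vs!i))) = (\<Sum>i\<in>U. 1)"
    using cU by (intro sum.cong) auto
  moreover have "(\<Sum>i\<in>D. int (card (vs!nx i)) - int (card (vs!i))) = (\<Sum>i\<in>D. -1)"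
    using cD by (intro sum.cong) auto
  ultimately have cardUD: "card U = card D" by simp
  have nxUD: "nx ` U \<subseteq> D"
  proof
    fix j assume "j \<in> nx ` U"
    then obtain i where iU: "i \<in> U" and j: "j = nx i" by blast
    have jn: "j < n" using j n0 nx_def by simp
    show "j \<in> D"
    proof (rule ccontr)
      assume "j \<notin> D"
      hence jU: "j \<in> U" using jn D_def by blast
      have e1: "(vs!nx j, vs!j) \<in> m" and e2: "(vs!j, vs!i) \<in> m"
        using iU jU sub j unfolding U_def by auto
      have "vs!j \<noteq> vs!i" using cU[OF iU] j by auto
      thus False using matching_clash[OF mK e2 e1] by auto
    qed
  qed
  have injU: "inj_on nx U" using bij UD unfolding bij_betw_def by (metis inj_on_subset sup_ge1)
  have nxUD2: "nx ` U = D"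
    using card_subset_eq[OF finU(2) nxUD] card_image[OF injU] cardUD by simp
  obtain i where ilt: "i < n" and a: "a = (vs!i, vs!nx i)"
    using aC unfolding cycle_arcs_def n_def nx_def by blast
  show "a \<in> reversed_arcs K m"
  proof (cases "(vs!nx i, vs!i) \<in> m'")
    case True thus ?thesis using sub a unfolding reversed_arcs_def by auto
  next
    case False
    hence iD: "i \<in> D" using ilt unfolding D_def U_def by auto
    have afe: "a \<in> face_edges K" "a \<notin> m'"
      using arc[OF ilt] False a unfolding reversed_arcs_def by auto
    show ?thesis
    proof (rule ccontr)
      assume "a \<notin> reversed_arcs K m"
      hence am: "a \<in> m" using afe unfolding reversed_arcs_def by auto
      obtain k where kU: "k \<in> U" and ik: "i = nx k" using iD nxUD2 by blast
      have "(vs!i, vs!k) \<in> m" using kU ik sub unfolding U_def by auto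
      moreover have "(vs!i, vs!k) \<noteq> a" using kU ik afe a unfolding U_def by auto
      ultimately show False using matching_clash[OF mK _ am] a
        by (metis fst_conv)
    qed
  qed
qed


lemma reversed_finite: "simplicial_complex K \<Longrightarrow> is_matching K m \<Longrightarrow> finite (reversed_arcs K m)"
proof -
  assume K: "simplicial_complex K" and m: "is_matching K m"
  have "finite m" using face_edges_finite[OF K] m is_matching_def finite_subset by metis
  hence "finite {(\<tau>, \<sigma>). (\<sigma>, \<tau>) \<in> m}"
    by (rule finite_surj[of _ _ "\<lambda>(a,b). (b,a)"]) force
  thus ?thesis using face_edges_finite[OF K] unfolding reversed_arcs_def by simp
qed

lemma J_mono:
  assumes K: "simplicial_complex K" and m: "is_matching K m" and sub: "m' \<subseteq> m"
  shows "J K m' \<le> J K m"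
proof -
  have "directed_cycles (reversed_arcs K m') \<subseteq> directed_cycles (reversed_arcs K m)"
    unfolding directed_cycles_def using cycle_mono[OF m sub] by blast
  moreover have "finite (directed_cycles (reversed_arcs K m))"
    by (rule finite_subset[of _ "Pow (reversed_arcs K m)"])
       (use reversed_finite[OF K m] in \<open>auto simp: directed_cycles_def\<close>)
  ultimately show ?thesis unfolding J_def by (rule card_mono[rotated])
qed

lemma matching_finite: "simplicial_complex K \<Longrightarrow> is_matching K m \<Longrightarrow> finite m"
  using face_edges_finite is_matching_def finite_subset by metis

lemma even_pair:
  assumes K: "simplicial_complex K" and m: "is_matching K m"
  shows "even (card {\<sigma> \<in> dJ_simplex K m. \<rho> \<in> dJ_simplex K \<sigma>})"
proof (cases "\<rho> \<subseteq> m \<and> card (m - \<rho>) = 2 \<and> card m \<ge> 3 \<and> J K \<rho> = J K m")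
  case True
  have fm: "finite m" using matching_finite[OF K m] .
  have eq: "{\<sigma> \<in> dJ_simplex K m. \<rho> \<in> dJ_simplex K \<sigma>} = (\<lambda>x. m - {x}) ` (m - \<rho>)"
  proof
    show "{\<sigma> \<in> dJ_simplex K m. \<rho> \<in> dJ_simplex K \<sigma>} \<subseteq> (\<lambda>x. m - {x}) ` (m - \<rho>)"
    proof
      fix \<sigma> assume "\<sigma> \<in> {\<sigma> \<in> dJ_simplex K m. \<rho> \<in> dJ_simplex K \<sigma>}"
      then obtain a b where "a \<in> m" "\<sigma> = m - {a}" "b \<in> \<sigma>" "\<rho> = \<sigma> - {b}"
        unfolding dJ_simplex_def by blast
      thus "\<sigma> \<in> (\<lambda>x. m - {x}) ` (m - \<rho>)" by blast
    qed
  next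
    show "(\<lambda>x. m - {x}) ` (m - \<rho>) \<subseteq> {\<sigma> \<in> dJ_simplex K m. \<rho> \<in> dJ_simplex K \<sigma>}"
    proof
      fix \<sigma> assume "\<sigma> \<in> (\<lambda>x. m - {x}) ` (m - \<rho>)"
      then obtain x where x: "x \<in> m - \<rho>" and s: "\<sigma> = m - {x}" by blast
      obtain a b where ab: "m - \<rho> = {a, b}" "a \<noteq> b" using True card_2_iff by metis
      obtain y where y: "m - \<rho> = {x, y}" "x \<noteq> y"
      proof (cases "x = a")
        case True thus ?thesis using that ab by blast
      next
        case False hence "x = b" using ab x by blast
        thus ?thesis using that ab by (metis insert_commute)
      qed
      have rs: "\<rho> = \<sigma> - {y}" using y s True by auto
      have ys: "y \<in> \<sigma>" using y s by auto
      have cs: "card \<sigma> = card m - 1" using s x fm by simp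
      have sm: "is_matching K \<sigma>" using matching_sub[OF m] s by blast
      have J1: "J K \<rho> \<le> J K \<sigma>" using J_mono[OF K sm] rs by blast
      have J2: "J K \<sigma> \<le> J K m" using J_mono[OF K m] s by blast
      have "\<sigma> \<in> dJ_simplex K m"
        unfolding dJ_simplex_def using x s True J1 J2
        by (intro CollectI exI[of _ x]) auto
      moreover have "\<rho> \<in> dJ_simplex K \<sigma>"
        unfolding dJ_simplex_def using rs ys cs True J1 J2
        by (intro CollectI exI[of _ y]) auto
      ultimately show "\<sigma> \<in> {\<sigma> \<in> dJ_simplex K m. \<rho> \<in> dJ_simplex K \<sigma>}" by blast
    qed
  qed
  have "inj_on (\<lambda>x. m - {x}) (m - \<rho>)" by (rule inj_onI) auto
  hence "card {\<sigma> \<in> dJ_simplex K m. \<rho> \<in> dJ_simplex K \<sigma>} = 2"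
    using eq True card_image by metis
  thus ?thesis by simp
next
  case False
  have "{\<sigma> \<in> dJ_simplex K m. \<rho> \<in> dJ_simplex K \<sigma>} = {}"
  proof (rule ccontr)
    assume "{\<sigma> \<in> dJ_simplex K m. \<rho> \<in> dJ_simplex K \<sigma>} \<noteq> {}"
    then obtain a b \<sigma> where ab: "a \<in> m" "\<sigma> = m - {a}" "card m \<ge> 2" "J K \<sigma> = J K m"
       "b \<in> \<sigma>" "\<rho> = \<sigma> - {b}" "card \<sigma> \<ge> 2" "J K \<rho> = J K \<sigma>"
      unfolding dJ_simplex_def by blast
    have fm: "finite m" using matching_finite[OF K m] .
    have "m - \<rho> = {a, b}" "a \<noteq> b" using ab by auto
    moreover have "card \<sigma> = card m - 1" using ab fm by simp
    ultimately show False using False ab by auto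
  qed
  thus ?thesis by (metis card.empty even_zero)
qed

lemma even_sum_card:
  "finite T \<Longrightarrow> even (\<Sum>x\<in>T. (f x :: nat)) = even (card {x \<in> T. odd (f x)})"
proof (induction T rule: finite_induct)
  case empty thus ?case by simp
next
  case (insert a T)
  have "{x \<in> insert a T. odd (f x)} = (if odd (f a) then insert a {x \<in> T. odd (f x)} else {x \<in> T. odd (f x)})"
    by auto
  thus ?case using insert by auto
qed

theorem mainTheorem5:
  fixes K :: "'v set set"
  assumes "simplicial_complex K"
  shows "(\<forall>c. c \<subseteq> matching_simplices K \<longrightarrow> dJ K (dJ K c) = {}) \<and>
         (\<forall>m \<in> matching_simplices K. \<forall>\<tau> \<in> dJ_simplex K m.
            \<tau> \<in> matching_simplices K \<and> card \<tau> + 1 = card m \<and> J K \<tau> = J K m)"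
proof (intro conjI allI impI ballI)
  fix m \<tau> assume m: "m \<in> matching_simplices K" and t: "\<tau> \<in> dJ_simplex K m"
  have mm: "is_matching K m" using m matching_simplices_def by blast
  have fm: "finite m" using matching_finite[OF assms mm] .
  obtain e where e: "e \<in> m" "\<tau> = m - {e}" "card m \<ge> 2" "J K \<tau> = J K m"
    using t unfolding dJ_simplex_def by blast
  have ct: "card \<tau> + 1 = card m" using e fm by simp
  hence "\<tau> \<noteq> {}" using e by (metis card.empty add_0 numeral_le_one_iff semiring_norm(69))
  thus "\<tau> \<in> matching_simplices K" "card \<tau> + 1 = card m" "J K \<tau> = J K m"
    using matching_sub[OF mm] e ct unfolding matching_simplices_def by auto
next
  fix c assume c: "c \<subseteq> matching_simplices K"
  have fc: "finite c"
    by (rule finite_subset[OF c], rule finite_subset[of _ "Pow (face_edges K)"])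
       (use face_edges_finite[OF assms] in \<open>auto simp: matching_simplices_def is_matching_def\<close>)
  have fdj: "finite (dJ_simplex K m)" if "m \<in> c" for m
  proof -
    have "finite m" using that c matching_finite[OF assms] matching_simplices_def by blast
    moreover have "dJ_simplex K m \<subseteq> (\<lambda>e. m - {e}) ` m" unfolding dJ_simplex_def by blast
    ultimately show ?thesis using finite_subset by blast
  qed
  show "dJ K (dJ K c) = {}"
  proof (rule ccontr)
    assume "dJ K (dJ K c) \<noteq> {}"
    then obtain \<rho> where r: "odd (card {\<sigma> \<in> dJ K c. \<rho> \<in> dJ_simplex K \<sigma>})"
      unfolding dJ_def by blast
    define N where "N \<sigma> = card {m \<in> c. \<sigma> \<in> dJ_simplex K m}" for \<sigma>
    define T where "T = {\<sigma>. \<rho> \<in> dJ_simplex K \<sigma> \<and> (\<exists>m\<in>c. \<sigma> \<in> dJ_simplex K m)}"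
    have fT: "finite T"
      by (rule finite_subset[of _ "\<Union>m\<in>c. dJ_simplex K m"]) (use fc fdj in \<open>auto simp: T_def\<close>)
    have setEq: "{\<sigma> \<in> dJ K c. \<rho> \<in> dJ_simplex K \<sigma>} = {\<sigma> \<in> T. odd (N \<sigma>)}"
    proof -
      have "odd (N \<sigma>) \<Longrightarrow> \<exists>m\<in>c. \<sigma> \<in> dJ_simplex K m" for \<sigma>
        unfolding N_def by (metis (no_types, lifting) card.empty empty_Collect_eq even_zero)
      thus ?thesis unfolding dJ_def T_def N_def by auto
    qed
    have "(\<Sum>\<sigma>\<in>T. N \<sigma>) = (\<Sum>\<sigma>\<in>T. \<Sum>m\<in>c. if \<sigma> \<in> dJ_simplex K m then 1 else 0)"
      unfolding N_def using fc by (simp add: sum.If_cases Collect_conj_eq Int_commute)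
    also have "\<dots> = (\<Sum>m\<in>c. \<Sum>\<sigma>\<in>T. if \<sigma> \<in> dJ_simplex K m then 1 else 0)"
      by (rule sum.swap)
    also have "\<dots> = (\<Sum>m\<in>c. card {\<sigma> \<in> dJ_simplex K m. \<rho> \<in> dJ_simplex K \<sigma>})"
    proof (rule sum.cong[OF refl])
      fix m assume mc: "m \<in> c"
      have "{\<sigma> \<in> T. \<sigma> \<in> dJ_simplex K m} = {\<sigma> \<in> dJ_simplex K m. \<rho> \<in> dJ_simplex K \<sigma>}"
        using mc unfolding T_def by auto
      thus "(\<Sum>\<sigma>\<in>T. if \<sigma> \<in> dJ_simplex K m then 1 else 0) = card {\<sigma> \<in> dJ_simplex K m. \<rho> \<in> dJ_simplex K \<sigma>}"
        using fT by (simp add: sum.If_cases Collect_conj_eq Int_commute Collect_mem_eq)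
    qed
    finally have "even (\<Sum>\<sigma>\<in>T. N \<sigma>)"
      using even_pair[OF assms] c unfolding matching_simplices_def
      by (metis (no_types, lifting) dvd_sum mem_Collect_eq subsetD)
    hence "even (card {\<sigma> \<in> T. odd (N \<sigma>)})" using even_sum_card[OF fT] by blast
    thus False using r setEq by simp
  qed
qed

end
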